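(* In the algorithm GBGC, equip $G$ with the relation: $(\mathbf u',f')<(\mathbf u,f)$ iff, with $L=\mathrm{lcm}(\mathrm{lpp}(\mathbf u),\mathrm{lpp}(\mathbf u'))$, $t'=L/\mathrm{lpp}(\mathbf u')$, $t=L/\mathrm{lpp}(\mathbf u)$, either $\mathrm{lpp}(t'f')\prec\mathrm{lpp}(tf)$, or $\mathrm{lpp}(t'f')=\mathrm{lpp}(tf)$ and $(\mathbf u',f')$ was added to $G$ later than $(\mathbf u,f)$. Then: (i) whenever a selected critical pair $[t_f(\mathbf u,f),t_g(\mathbf v,g)]$ is regular and not gen-rewritable by $G$ and its S-polynomial reduces to $(\mathbf w,h)$, one has $(\mathbf w,h)<(\mathbf u,f)$ (admissibility); (ii) if $(\mathbf u,f)\in G$, $f\ne 0$, $t$ a power product, and $t(\mathbf u,f)$ is reducible by $G$ and reduces to $(\mathbf w,h)$ for which there is $(\mathbf u',f')\in G$ with $\mathrm{lpp}(\mathbf u')\mid\mathrm{lpp}(\mathbf w)$, $\mathrm{lpp}(f')\mid\mathrm{lpp}(h)$, $\mathrm{lpp}(\mathbf w)/\mathrm{lpp}(\mathbf u')=\mathrm{lpp}(h)/\mathrm{lpp}(f')$ and $\mathrm{lc}(\mathbf w)/\mathrm{lc}(\mathbf u')=\mathrm{lc}(h)/\mathrm{lc}(f')$ (eventually super top-reducible), then $t(\mathbf u,f)$ is gen-rewritable by $G$ with respect to this relation.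
   Context: Setting: $R=K[x_1,\dots,x_n]$, $f_1,\dots,f_m\in R$, $\mathbf M=\{(\mathbf u,f)\in R^m\times R:\mathbf u\cdot(f_1,\dots,f_m)=f\}$, $\mathbf e_i$ unit vectors, arbitrary term orders $\prec$ on $R$ and on $R^m$, $\mathrm{lpp}$/$\mathrm{lc}$ leading power product (term)/coefficient, $\mathrm{lpp}(0)=0$ below all nonzero terms. Critical pair $[t_f(\mathbf u,f),t_g(\mathbf v,g)]$ of $(\mathbf u,f),(\mathbf v,g)$ ($f,g\ne0$): $t_f=\mathrm{lcm}(\mathrm{lpp}(f),\mathrm{lpp}(g))/\mathrm{lpp}(f)$, $t_g$ likewise, with $\mathrm{lpp}(t_f\mathbf u)\succeq\mathrm{lpp}(t_g\mathbf v)$; S-polynomial $t_f(\mathbf u,f)-c\,t_g(\mathbf v,g)$, $c=\mathrm{lc}(f)/\mathrm{lc}(g)$; regular if $\mathrm{lpp}(t_f\mathbf u)\succ\mathrm{lpp}(t_g\mathbf v)$. Gen-rewritable: $t(\mathbf u,f)$ ($(\mathbf u,f)\in B$, $f\ne0$) is gen-rewritable by $B$ if some $(\mathbf u',f')\in B$ has $\mathrm{lpp}(\mathbf u')\mid\mathrm{lpp}(t\mathbf u)$ and $(\mathbf u',f')<(\mathbf u,f)$; a critical pair is gen-rewritable if either component is. Reducibility/reduction of $(\mathbf u,f)$ by $B$: a one-step reduction replaces it by $(\mathbf u-ct\mathbf v,f-ctg)$ for some $(\mathbf v,g)\in B$, $g\ne0$, $\mathrm{lpp}(g)\mid\mathrm{lpp}(f)$,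 $c=\mathrm{lc}(f)/\mathrm{lc}(g)$, $t=\mathrm{lpp}(f)/\mathrm{lpp}(g)$, provided $\mathrm{lpp}(\mathbf u-ct\mathbf v)=\mathrm{lpp}(\mathbf u)$; reducing means repeating until no step applies. Algorithm GBGC: start with $G=\{(\mathbf e_i,f_i)\}$, CPairs = all critical pairs of these, then add $(f_j\mathbf e_i-f_i\mathbf e_j,0)$ ($i<j$) to $G$; while CPairs nonempty, remove any pair; if it is regular and not gen-rewritable by $G$, reduce its S-polynomial by $G$ to $(\mathbf w,h)$; if $h\ne0$, add critical pairs of $(\mathbf w,h)$ with all $(\mathbf w',h')\in G$, $h'\ne0$, to CPairs and add $(h\mathbf e_i-f_i\mathbf w,0)$, $i=1..m$, to $G$; add $(\mathbf w,h)$ to $G$. *)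

theory Defs
  imports Main "HOL-Library.Poly_Mapping"
begin

(* Power products in the variables of type 'x (a finite type = x_1..x_n),
   polynomials in R = K[x_1..x_n], vectors in R^m (components 0..m-1),
   module terms t e_i = (t,i). *)
type_synonym 'x pp = "'x \<Rightarrow>\<^sub>0 nat"
type_synonym ('x,'a) poly = "'x pp \<Rightarrow>\<^sub>0 'a"
type_synonym ('x,'a) vec = "nat \<Rightarrow> ('x,'a) poly"
type_synonym 'x mterm = "'x pp \<times> nat"
type_synonym ('x,'a) labpoly = "('x,'a) vec \<times> ('x,'a) poly"

definition strict_linear :: "('t \<Rightarrow> 't \<Rightarrow> bool) \<Rightarrow> bool" where
  "strict_linear ord \<longleftrightarrow> (\<forall>s. \<not> ord s s) \<and> (\<forall>s t u. ord s t \<longrightarrow> ord t u \<longrightarrow> ord s u)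
     \<and> (\<forall>s t. s \<noteq> t \<longrightarrow> ord s t \<or> ord t s)"

definition pp_term_order :: "('x pp \<Rightarrow> 'x pp \<Rightarrow> bool) \<Rightarrow> bool" where
  "pp_term_order ord \<longleftrightarrow> strict_linear ord \<and> wf {(s,t). ord s t}
     \<and> (\<forall>t. t \<noteq> 0 \<longrightarrow> ord 0 t) \<and> (\<forall>s t r. ord s t \<longrightarrow> ord (s + r) (t + r))"

definition mod_term_order :: "('x mterm \<Rightarrow> 'x mterm \<Rightarrow> bool) \<Rightarrow> bool" where
  "mod_term_order ord \<longleftrightarrow> strict_linear ord \<and> wf {(s,t). ord s t}
     \<and> (\<forall>t i r. r \<noteq> 0 \<longrightarrow> ord (t, i) (t + r, i))
     \<and> (\<forall>s i t j r. ord (s, i) (t, j) \<longrightarrow> ord (s + r, i) (t + r, j))"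

(* leading term of a finite set of terms; None plays the role of lpp(0) = 0 *)
definition lterm :: "('t \<Rightarrow> 't \<Rightarrow> bool) \<Rightarrow> 't set \<Rightarrow> 't option" where
  "lterm ord S = (if S = {} then None else Some (THE t. t \<in> S \<and> (\<forall>s\<in>S. s \<noteq> t \<longrightarrow> ord s t)))"

definition opt_less :: "('t \<Rightarrow> 't \<Rightarrow> bool) \<Rightarrow> 't option \<Rightarrow> 't option \<Rightarrow> bool" where
  "opt_less ord a b = (case b of None \<Rightarrow> False
      | Some y \<Rightarrow> (case a of None \<Rightarrow> True | Some x \<Rightarrow> ord x y))"

definition lppR :: "('x pp \<Rightarrow> 'x pp \<Rightarrow> bool) \<Rightarrow> ('x,'a::zero) poly \<Rightarrow> 'x pp option" where
  "lppR ord f = lterm ord (Poly_Mapping.keys f)"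

definition lcR :: "('x pp \<Rightarrow> 'x pp \<Rightarrow> bool) \<Rightarrow> ('x,'a::zero) poly \<Rightarrow> 'a" where
  "lcR ord f = (case lppR ord f of None \<Rightarrow> 0 | Some t \<Rightarrow> Poly_Mapping.lookup f t)"

definition vkeys :: "('x,'a::zero) vec \<Rightarrow> 'x mterm set" where
  "vkeys u = {(t, i). t \<in> Poly_Mapping.keys (u i)}"

definition lppM :: "('x mterm \<Rightarrow> 'x mterm \<Rightarrow> bool) \<Rightarrow> ('x,'a::zero) vec \<Rightarrow> 'x mterm option" where
  "lppM ord u = lterm ord (vkeys u)"

definition lcM :: "('x mterm \<Rightarrow> 'x mterm \<Rightarrow> bool) \<Rightarrow> ('x,'a::zero) vec \<Rightarrow> 'a" where
  "lcM ord u = (case lppM ord u of None \<Rightarrow> 0 | Some (t, i) \<Rightarrow> Poly_Mapping.lookup (u i) t)"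

definition pp_dvd :: "'x pp \<Rightarrow> 'x pp \<Rightarrow> bool" where
  "pp_dvd s t \<longleftrightarrow> (\<exists>r. t = s + r)"

definition pp_lcm :: "'x pp \<Rightarrow> 'x pp \<Rightarrow> 'x pp" where
  "pp_lcm s t = s + (t - s)"   (* pointwise maximum of exponents *)

(* divisibility of leading terms of vectors (ring convention: everything divides 0) *)
definition mdvd :: "'x mterm option \<Rightarrow> 'x mterm option \<Rightarrow> bool" where
  "mdvd a b = (case b of None \<Rightarrow> True
      | Some (t, j) \<Rightarrow> (case a of None \<Rightarrow> False | Some (s, i) \<Rightarrow> i = j \<and> pp_dvd s t))"

definition mono :: "'x pp \<Rightarrow> ('x,'a::{zero,one}) poly" where
  "mono t = Poly_Mapping.single t 1"

definition vsmul :: "('x,'a::semiring_0) poly \<Rightarrow> ('x,'a) vec \<Rightarrow> ('x,'a) vec" where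
  "vsmul p u = (\<lambda>i. p * u i)"

definition unitv :: "nat \<Rightarrow> ('x,'a::{zero_neq_one}) vec" where
  "unitv i = (\<lambda>j. if j = i then 1 else 0)"

definition lmul :: "'x pp \<Rightarrow> ('x,'a::semiring_1) labpoly \<Rightarrow> ('x,'a) labpoly" where
  "lmul t p = (vsmul (mono t) (fst p), mono t * snd p)"

context
  fixes ordR :: "'x pp \<Rightarrow> 'x pp \<Rightarrow> bool"
    and ordM :: "'x mterm \<Rightarrow> 'x mterm \<Rightarrow> bool"
begin

(* the relation < on G (elements identified by their position in the list G,
   i.e. by the time they were added) *)
definition gless :: "('x,'a::field) labpoly list \<Rightarrow> nat \<Rightarrow> nat \<Rightarrow> bool" where
  "gless G k' k \<longleftrightarrow>
     (case (lppM ordM (fst (G ! k')), lppM ordM (fst (G ! k))) of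
        (Some (s', _), Some (s, _)) \<Rightarrow>
          (let L = pp_lcm s s'; t' = L - s'; t = L - s;
               a = lppR ordR (mono t' * snd (G ! k')); b = lppR ordR (mono t * snd (G ! k))
           in opt_less ordR a b \<or> (a = b \<and> k < k'))
      | _ \<Rightarrow> False)"

definition genrew :: "('x,'a::field) labpoly list \<Rightarrow> 'x pp \<Rightarrow> nat \<Rightarrow> bool" where
  "genrew G t k \<longleftrightarrow> (\<exists>k' < length G.
      mdvd (lppM ordM (fst (G ! k'))) (lppM ordM (fst (lmul t (G ! k)))) \<and> gless G k' k)"

definition red1 :: "('x,'a::field) labpoly list \<Rightarrow> ('x,'a) labpoly \<Rightarrow> ('x,'a) labpoly \<Rightarrow> bool" where
  "red1 G p q \<longleftrightarrow> (\<exists>v g t. (v, g) \<in> set G \<and> g \<noteq> 0 \<and> snd p \<noteq> 0 \<and>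
      the (lppR ordR (snd p)) = the (lppR ordR g) + t \<and>
      (let c = lcR ordR (snd p) / lcR ordR g in
        q = (fst p - vsmul (Poly_Mapping.single t c) v, snd p - Poly_Mapping.single t c * g) \<and>
        lppM ordM (fst q) = lppM ordM (fst p)))"

definition reducible :: "('x,'a::field) labpoly list \<Rightarrow> ('x,'a) labpoly \<Rightarrow> bool" where
  "reducible G p \<longleftrightarrow> (\<exists>q. red1 G p q)"

definition reduces :: "('x,'a::field) labpoly list \<Rightarrow> ('x,'a) labpoly \<Rightarrow> ('x,'a) labpoly \<Rightarrow> bool" where
  "reduces G p q \<longleftrightarrow> (red1 G)\<^sup>*\<^sup>* p q \<and> \<not> reducible G q"

definition tmul :: "('x,'a::field) labpoly list \<Rightarrow> nat \<Rightarrow> nat \<Rightarrow> 'x pp" where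
  "tmul G k l = (let a = the (lppR ordR (snd (G ! k))); b = the (lppR ordR (snd (G ! l)))
                 in pp_lcm a b - a)"

definition regular_cp :: "('x,'a::field) labpoly list \<Rightarrow> nat \<Rightarrow> nat \<Rightarrow> bool" where
  "regular_cp G k l \<longleftrightarrow> snd (G ! k) \<noteq> 0 \<and> snd (G ! l) \<noteq> 0 \<and>
     opt_less ordM (lppM ordM (fst (lmul (tmul G l k) (G ! l))))
                   (lppM ordM (fst (lmul (tmul G k l) (G ! k))))"

definition cp_genrew :: "('x,'a::field) labpoly list \<Rightarrow> nat \<Rightarrow> nat \<Rightarrow> bool" where
  "cp_genrew G k l \<longleftrightarrow> genrew G (tmul G k l) k \<or> genrew G (tmul G l k) l"

definition spoly :: "('x,'a::field) labpoly list \<Rightarrow> nat \<Rightarrow> nat \<Rightarrow> ('x,'a) labpoly" where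
  "spoly G k l = (let c = lcR ordR (snd (G ! k)) / lcR ordR (snd (G ! l));
                      p = lmul (tmul G k l) (G ! k); q = lmul (tmul G l k) (G ! l)
                  in (fst p - vsmul (Poly_Mapping.single 0 c) (fst q),
                      snd p - Poly_Mapping.single 0 c * snd q))"

definition new_syz :: "(nat \<Rightarrow> ('x,'a::field) poly) \<Rightarrow> nat \<Rightarrow> ('x,'a) labpoly \<Rightarrow> ('x,'a) labpoly list" where
  "new_syz F m wh = map (\<lambda>i. (vsmul (snd wh) (unitv i) - vsmul (F i) (fst wh), 0)) [0..<m]"

definition G_after :: "(nat \<Rightarrow> ('x,'a::field) poly) \<Rightarrow> nat \<Rightarrow> ('x,'a) labpoly list \<Rightarrow> ('x,'a) labpoly
      \<Rightarrow> ('x,'a) labpoly list" where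
  "G_after F m G wh = G @ (if snd wh \<noteq> 0 then new_syz F m wh else []) @ [wh]"

(* states: (G, CPairs); critical pairs stored as pairs of positions in G (unoriented) *)
definition gbgc_init :: "(nat \<Rightarrow> ('x,'a::field) poly) \<Rightarrow> nat \<Rightarrow> (nat \<times> nat) list
      \<Rightarrow> ('x,'a) labpoly list \<times> (nat \<times> nat) set" where
  "gbgc_init F m ps =
     (map (\<lambda>i. (unitv i, F i)) [0..<m] @
      map (\<lambda>(i, j). (vsmul (F j) (unitv i) - vsmul (F i) (unitv j), 0)) ps,
      {(i, j). i < j \<and> j < m \<and> F i \<noteq> 0 \<and> F j \<noteq> 0})"

definition gbgc_step :: "(nat \<Rightarrow> ('x,'a::field) poly) \<Rightarrow> nat
      \<Rightarrow> ('x,'a) labpoly list \<times> (nat \<times> nat) set \<Rightarrow> ('x,'a) labpoly list \<times> (nat \<times> nat) set \<Rightarrow> bool" where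
  "gbgc_step F m st st' \<longleftrightarrow> (case st of (G, CP) \<Rightarrow> \<exists>p\<in>CP.
     (if \<exists>(k, l)\<in>{p, prod.swap p}. regular_cp G k l \<and> \<not> cp_genrew G k l
      then (\<exists>k l wh. (k, l) \<in> {p, prod.swap p} \<and> regular_cp G k l \<and> \<not> cp_genrew G k l \<and>
              reduces G (spoly G k l) wh \<and>
              st' = (G_after F m G wh,
                     if snd wh \<noteq> 0
                     then (CP - {p}) \<union> {(length G + m, j) | j. j < length G \<and> snd (G ! j) \<noteq> 0}
                     else CP - {p}))
      else st' = (G, CP - {p})))"

end

end

theory Submission
  imports Defs
begin

abbreviation lk where "lk \<equiv> Poly_Mapping.lookup"
abbreviation ks where "ks \<equiv> Poly_Mapping.keys"

lemma sl_parts: assumes "strict_linear ord"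
  shows "\<forall>s. \<not> ord s s" "\<forall>s t u. ord s t \<longrightarrow> ord t u \<longrightarrow> ord s u"
    "\<forall>s t. s \<noteq> t \<longrightarrow> ord s t \<or> ord t s"
  using assms unfolding strict_linear_def
  by (rule conjunct1, rule conjunct1[OF conjunct2], rule conjunct2[OF conjunct2])
lemma sl_irrefl: "strict_linear ord \<Longrightarrow> \<not> ord s s"
  using sl_parts(1) by fast
lemma sl_trans: assumes "strict_linear ord" "ord s t" "ord t u" shows "ord s u"
  by (rule sl_parts(2)[OF assms(1), rule_format, OF assms(2,3)])
lemma sl_total: assumes "strict_linear ord" "s \<noteq> t" shows "ord s t \<or> ord t s"
  by (rule sl_parts(3)[OF assms(1), rule_format, OF assms(2)])
lemma sl_asym: assumes "strict_linear ord" "ord s t" shows "\<not> ord t s"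
proof
  assume "ord t s" then have "ord s s" by (rule sl_trans[OF assms(1) assms(2)])
  then show False using sl_irrefl[OF assms(1)] by blast
qed

lemma lterm_Some:
  assumes "strict_linear ord" "x \<in> S" "\<forall>y\<in>S. y \<noteq> x \<longrightarrow> ord y x"
  shows "lterm ord S = Some x"
proof -
  have "(THE t. t \<in> S \<and> (\<forall>s\<in>S. s \<noteq> t \<longrightarrow> ord s t)) = x"
  proof (rule the_equality)
    show "x \<in> S \<and> (\<forall>s\<in>S. s \<noteq> x \<longrightarrow> ord s x)" using assms(2,3) by blast
  next
    fix t assume t: "t \<in> S \<and> (\<forall>s\<in>S. s \<noteq> t \<longrightarrow> ord s t)"
    show "t = x"
    proof (rule ccontr)
      assume "t \<noteq> x"
      then have "ord t x" using assms(3) t by blast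
      moreover have "x \<noteq> t" using \<open>t \<noteq> x\<close> by simp
      then have "ord x t" using t assms(2) by blast
      ultimately show False using sl_asym[OF assms(1)] by blast
    qed
  qed
  moreover have "S \<noteq> {}" using assms(2) by blast
  ultimately show ?thesis unfolding lterm_def by simp
qed

lemma lterm_ex:
  assumes "strict_linear ord" "finite S" "S \<noteq> {}"
  shows "\<exists>x\<in>S. \<forall>y\<in>S. y \<noteq> x \<longrightarrow> ord y x"
  using assms(2,3)
proof (induction S rule: finite_ne_induct)
  case (singleton x) then show ?case by auto
next
  case (insert a F)
  then obtain x where x: "x \<in> F" "\<forall>y\<in>F. y \<noteq> x \<longrightarrow> ord y x" by blast
  show ?case
  proof (cases "ord a x")
    case True then show ?thesis using x by auto
  next
    case False
    then have "a = x \<or> ord x a" using sl_total[OF assms(1)] by blast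
    then show ?thesis
    proof
      assume "a = x" then show ?thesis using insert(2) x by blast
    next
      assume xa: "ord x a"
      have "\<forall>y\<in>insert a F. y \<noteq> a \<longrightarrow> ord y a"
      proof (intro ballI impI)
        fix y assume "y \<in> insert a F" "y \<noteq> a"
        then have "y \<in> F" by simp
        show "ord y a"
        proof (cases "y = x")
          case True then show ?thesis using xa by simp
        next
          case False then have "ord y x" using x \<open>y \<in> F\<close> by blast
          then show ?thesis using sl_trans[OF assms(1) _ xa] by blast
        qed
      qed
      then show ?thesis by blast
    qed
  qed
qed

lemma lterm_SomeD:
  assumes "strict_linear ord" "finite S" "lterm ord S = Some x"
  shows "x \<in> S \<and> (\<forall>y\<in>S. y \<noteq> x \<longrightarrow> ord y x)"
proof -
  have "S \<noteq> {}" using assms(3) unfolding lterm_def by auto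
  then obtain z where z: "z \<in> S" "\<forall>y\<in>S. y \<noteq> z \<longrightarrow> ord y z" using lterm_ex[OF assms(1,2)] by blast
  then have "lterm ord S = Some z" by (rule lterm_Some[OF assms(1)])
  then show ?thesis using assms(3) \<open>z \<in> S\<close> \<open>\<forall>y\<in>S. y \<noteq> z \<longrightarrow> ord y z\<close> by simp
qed

lemma lterm_None: "lterm ord S = None \<longleftrightarrow> S = {}"
  unfolding lterm_def by auto

lemma lterm_less:
  assumes "strict_linear ord" "finite S" "\<forall>y\<in>S. ord y x"
  shows "opt_less ord (lterm ord S) (Some x)"
proof (cases "S = {}")
  case True then show ?thesis by (simp add: lterm_def opt_less_def)
next
  case False
  then obtain z where "lterm ord S = Some z"
    by (simp add: lterm_def)
  then have "z \<in> S" using lterm_SomeD[OF assms(1,2)] by blast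
  then have "ord z x" using assms(3) by blast
  then show ?thesis using \<open>lterm ord S = Some z\<close> by (simp add: opt_less_def)
qed

lemma lterm_le_less:
  assumes "strict_linear ord" "finite S" "lterm ord S = Some z" "y \<in> S" "ord z x"
  shows "ord y x"
proof (cases "y = z")
  case True then show ?thesis using assms(5) by simp
next
  case False
  then have "ord y z" using lterm_SomeD[OF assms(1-3)] assms(4) by blast
  then show ?thesis by (rule sl_trans[OF assms(1) _ assms(5)])
qed

lemma lookup_single_mult:
  fixes t x :: "'x pp" and g :: "('x,'a::field) poly"
  shows "lk (Poly_Mapping.single t c * g) (t + x) = c * lk g x"
proof -
  have "lk (Poly_Mapping.single t c * g) (t + x)
      = (\<Sum>l. lk (Poly_Mapping.single t c) l * (\<Sum>q. lk g q when t + x = l + q))"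
    by (rule lookup_mult)
  also have "\<dots> = c * (\<Sum>q. lk g q when t + x = t + q)"
    by (simp add: lookup_single when_mult mult_when)
  also have "(\<Sum>q. lk g q when t + x = t + q) = (\<Sum>q. lk g q when x = q)"
    by simp
  also have "\<dots> = lk g x" by simp
  finally show ?thesis .
qed

lemma keys_single_mult:
  fixes t :: "'x pp" and g :: "('x,'a::field) poly"
  shows "ks (Poly_Mapping.single t c * g) \<subseteq> (+) t ` ks g"
proof
  fix z assume "z \<in> ks (Poly_Mapping.single t c * g)"
  then obtain a b where ab: "z = a + b" "a \<in> ks (Poly_Mapping.single t c)" "b \<in> ks g"
    using keys_mult[of "Poly_Mapping.single t c" g] by blast
  have "a = t" using ab(2) by (simp split: if_splits)
  then show "z \<in> (+) t ` ks g" using ab by blast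
qed

lemma keys_mono_mult:
  fixes t :: "'x pp" and g :: "('x,'a::field) poly"
  shows "ks (mono t * g) = (+) t ` ks g"
proof
  show "ks (mono t * g) \<subseteq> (+) t ` ks g" unfolding mono_def by (rule keys_single_mult)
  show "(+) t ` ks g \<subseteq> ks (mono t * g)"
    using lookup_single_mult[of t 1 g] by (auto simp: mono_def in_keys_iff)
qed

lemma pp_parts: assumes "pp_term_order ord"
  shows "strict_linear ord" "\<forall>s t r. ord s t \<longrightarrow> ord (s + r) (t + r)"
  using assms unfolding pp_term_order_def
  by (rule conjunct1, rule conjunct2[OF conjunct2[OF conjunct2]])

lemma pp_mono_add:
  assumes "pp_term_order ord" "ord a b" shows "ord (t + a) (t + b)"
proof -
  have "ord (a + t) (b + t)" by (rule pp_parts(2)[OF assms(1), rule_format, OF assms(2)])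
  then show ?thesis by (simp only: add.commute)
qed

lemma pp_cancel:
  assumes "pp_term_order ord" "ord (a + r) (b + r)" shows "ord a b"
proof (rule ccontr)
  have sl: "strict_linear ord" using assms(1) by (simp add: pp_term_order_def)
  assume "\<not> ord a b"
  then have "a = b \<or> ord b a" using sl_total[OF sl] by blast
  then show False
  proof
    assume "a = b" then show False using assms(2) sl_irrefl[OF sl] by simp
  next
    assume "ord b a" then have "ord (b + r) (a + r)" by (rule pp_parts(2)[OF assms(1), rule_format])
    then show False using assms(2) sl_asym[OF sl \<open>ord (b + r) (a + r)\<close>] by simp
  qed
qed

lemma lppR_mono_mult:
  fixes f :: "('x,'a::field) poly"
  assumes "pp_term_order ord" "lppR ord f = Some a"
  shows "lppR ord (mono t * f) = Some (t + a)"
proof -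
  have sl: "strict_linear ord" using assms(1) by (simp add: pp_term_order_def)
  have A: "a \<in> ks f \<and> (\<forall>y\<in>ks f. y \<noteq> a \<longrightarrow> ord y a)"
    using lterm_SomeD[OF sl finite_keys] assms(2) unfolding lppR_def by blast
  show ?thesis unfolding lppR_def keys_mono_mult
  proof (rule lterm_Some[OF sl])
    show "t + a \<in> (+) t ` ks f" using A by blast
    show "\<forall>y\<in>(+) t ` ks f. y \<noteq> t + a \<longrightarrow> ord y (t + a)"
    proof (intro ballI impI)
      fix y assume "y \<in> (+) t ` ks f" "y \<noteq> t + a"
      then obtain z where z: "z \<in> ks f" "y = t + z" by blast
      have "z \<noteq> a"
      proof
        assume "z = a" then show False using z(2) \<open>y \<noteq> t + a\<close> by simp
      qed
      then have "ord z a" using A z(1) by blast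
      then have "ord (t + z) (t + a)" by (rule pp_mono_add[OF assms(1)])
      then show "ord y (t + a)" using z(2) by simp
    qed
  qed
qed

lemma lppR_None: "lppR ord f = None \<longleftrightarrow> f = 0"
  unfolding lppR_def lterm_None by simp

lemma lppR_SomeD:
  assumes "pp_term_order ord" "lppR ord f = Some a"
  shows "a \<in> ks f \<and> (\<forall>y\<in>ks f. y \<noteq> a \<longrightarrow> ord y a)"
proof -
  have sl: "strict_linear ord" using assms(1) by (simp add: pp_term_order_def)
  show ?thesis using lterm_SomeD[OF sl finite_keys] assms(2) unfolding lppR_def by blast
qed

lemma cancel_less:
  fixes p g :: "('x,'a::field) poly"
  assumes "pp_term_order ord" "lppR ord p = Some x" "lppR ord g = Some y" "x = t + y"
    "lk p x = c * lk g y"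
  shows "opt_less ord (lppR ord (p - Poly_Mapping.single t c * g)) (Some x)"
proof -
  have sl: "strict_linear ord" using assms(1) by (simp add: pp_term_order_def)
  note P = lppR_SomeD[OF assms(1,2)] and Gg = lppR_SomeD[OF assms(1,3)]
  have "\<forall>z\<in>ks (p - Poly_Mapping.single t c * g). ord z x"
  proof
    fix z assume z: "z \<in> ks (p - Poly_Mapping.single t c * g)"
    have "z \<noteq> x"
    proof
      assume zx: "z = x"
      have L1: "lk (Poly_Mapping.single t c * g) x = c * lk g y"
        unfolding assms(4) by (rule lookup_single_mult)
      have "lk (p - Poly_Mapping.single t c * g) x = lk p x - lk (Poly_Mapping.single t c * g) x"
        by (rule lookup_minus)
      also have "\<dots> = 0" by (simp only: assms(5) L1 diff_self)
      finally have X: "lk (p - Poly_Mapping.single t c * g) x = 0" .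
      have "lk (p - Poly_Mapping.single t c * g) z \<noteq> 0" using z by (subst (asm) in_keys_iff)
      then have "lk (p - Poly_Mapping.single t c * g) x \<noteq> 0" using zx by (simp only: not_False_eq_True)
      then show False using X by (rule notE)
    qed
    moreover have "z \<in> ks p \<union> ks (Poly_Mapping.single t c * g)"
      by (rule subsetD[OF keys_diff z])
    then have "z \<in> ks p \<or> z \<in> ks (Poly_Mapping.single t c * g)" by (simp only: Un_iff)
    then show "ord z x"
    proof
      assume "z \<in> ks p" then show ?thesis using P \<open>z \<noteq> x\<close> by simp
    next
      assume "z \<in> ks (Poly_Mapping.single t c * g)"
      then obtain w where w: "w \<in> ks g" "z = t + w" using keys_single_mult by blast
      have "w \<noteq> y"
      proof
        assume "w = y" then show False using w(2) \<open>z \<noteq> x\<close> assms(4) by simp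
      qed
      then have "ord w y" using Gg w(1) by simp
      then have "ord (t + w) (t + y)" by (rule pp_mono_add[OF assms(1)])
      then show ?thesis using w(2) assms(4) by simp
    qed
  qed
  then show ?thesis unfolding lppR_def by (rule lterm_less[OF sl finite_keys])
qed


lemma lcR_eq: "lppR ord f = Some a \<Longrightarrow> lcR ord f = lk f a"
  unfolding lcR_def by simp

lemma opt_less_trans:
  assumes "strict_linear ord" "opt_less ord a b" "opt_less ord b c"
  shows "opt_less ord a c"
proof (cases c)
  case None then show ?thesis using assms(3) by (simp add: opt_less_def)
next
  case (Some z)
  show ?thesis
  proof (cases b)
    case None then show ?thesis using assms(2) by (simp add: opt_less_def)
  next
    case (Some y)
    then have yz: "ord y z" using assms(3) \<open>c = Some z\<close> by (simp add: opt_less_def)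
    show ?thesis
    proof (cases a)
      case None then show ?thesis using \<open>c = Some z\<close> by (simp add: opt_less_def)
    next
      case (Some x)
      then have "ord x y" using assms(2) \<open>b = Some y\<close> by (simp add: opt_less_def)
      then have "ord x z" by (rule sl_trans[OF assms(1) _ yz])
      then show ?thesis using \<open>a = Some x\<close> \<open>c = Some z\<close> by (simp add: opt_less_def)
    qed
  qed
qed

lemma red1_less:
  fixes G :: "('x,'a::field) labpoly list"
  assumes "pp_term_order ordR" "red1 ordR ordM G p q"
  shows "opt_less ordR (lppR ordR (snd q)) (lppR ordR (snd p)) \<and> lppM ordM (fst q) = lppM ordM (fst p)"
proof -
  obtain v g t where vg: "(v, g) \<in> set G" "g \<noteq> 0" "snd p \<noteq> 0"
    "the (lppR ordR (snd p)) = the (lppR ordR g) + t"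
    and q: "q = (fst p - vsmul (Poly_Mapping.single t (lcR ordR (snd p) / lcR ordR g)) v,
                 snd p - Poly_Mapping.single t (lcR ordR (snd p) / lcR ordR g) * g)"
    and M: "lppM ordM (fst q) = lppM ordM (fst p)"
    using assms(2) unfolding red1_def Let_def by blast
  obtain x where x: "lppR ordR (snd p) = Some x" using vg(3) lppR_None by (cases "lppR ordR (snd p)") auto
  obtain y where y: "lppR ordR g = Some y" using vg(2) lppR_None by (cases "lppR ordR g") auto
  have xy: "x = t + y" using vg(4) x y by (simp add: add.commute)
  have "y \<in> ks g" using lppR_SomeD[OF assms(1) y] by blast
  then have gy: "lk g y \<noteq> 0" by (simp add: in_keys_iff)
  define c where "c = lcR ordR (snd p) / lcR ordR g"
  have c: "lk (snd p) x = c * lk g y" unfolding c_def lcR_eq[OF x] lcR_eq[OF y] using gy by simp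
  have "opt_less ordR (lppR ordR (snd p - Poly_Mapping.single t c * g)) (Some x)"
    by (rule cancel_less[OF assms(1) x y xy c])
  then show ?thesis using q M x unfolding c_def by simp
qed

lemma red1_rtrancl:
  fixes G :: "('x,'a::field) labpoly list"
  assumes "pp_term_order ordR" "(red1 ordR ordM G)\<^sup>*\<^sup>* p q"
  shows "(lppR ordR (snd q) = lppR ordR (snd p) \<or> opt_less ordR (lppR ordR (snd q)) (lppR ordR (snd p)))
     \<and> lppM ordM (fst q) = lppM ordM (fst p)"
  using assms(2)
proof (induction rule: rtranclp_induct)
  case base then show ?case by simp
next
  case (step q r)
  have sl: "strict_linear ordR" by (rule pp_parts(1)[OF assms(1)])
  note R = red1_less[OF assms(1) step(2)]
  show ?case
  proof (cases "lppR ordR (snd q) = lppR ordR (snd p)")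
    case True then show ?thesis using R step(3) by simp
  next
    case False
    then have "opt_less ordR (lppR ordR (snd q)) (lppR ordR (snd p))" using step(3) by simp
    then have "opt_less ordR (lppR ordR (snd r)) (lppR ordR (snd p))"
      using opt_less_trans[OF sl] R by blast
    then show ?thesis using R step(3) by simp
  qed
qed

lemma reduces_strict:
  fixes G :: "('x,'a::field) labpoly list"
  assumes "pp_term_order ordR" "reducible ordR ordM G p" "reduces ordR ordM G p q"
  shows "opt_less ordR (lppR ordR (snd q)) (lppR ordR (snd p))"
proof -
  have sl: "strict_linear ordR" by (rule pp_parts(1)[OF assms(1)])
  have pq: "(red1 ordR ordM G)\<^sup>*\<^sup>* p q" "\<not> reducible ordR ordM G q"
    using assms(3) unfolding reduces_def by blast+
  have "p \<noteq> q" using assms(2) pq(2) by blast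
  from pq(1) this show ?thesis
  proof (cases rule: converse_rtranclpE)
    case (step p')
    note A = red1_less[OF assms(1) step(1)]
    note B = red1_rtrancl[OF assms(1) step(2)]
    show ?thesis
    proof (cases "lppR ordR (snd q) = lppR ordR (snd p')")
      case True then show ?thesis using A by simp
    next
      case False then show ?thesis using A B opt_less_trans[OF sl] by blast
    qed
  qed simp
qed


definition fsupp :: "('x,'a::zero) vec \<Rightarrow> bool" where
  "fsupp u \<longleftrightarrow> finite {i. u i \<noteq> 0}"

lemma vkeys_iff: "(s, i) \<in> vkeys u \<longleftrightarrow> s \<in> ks (u i)"
  by (simp add: vkeys_def)

lemma vkeys_finite:
  assumes "fsupp u" shows "finite (vkeys u)"
proof -
  have "vkeys u \<subseteq> (\<Union>i\<in>{i. u i \<noteq> 0}. (\<lambda>t. (t, i)) ` ks (u i))"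
  proof
    fix z assume "z \<in> vkeys u"
    then obtain s i where z: "z = (s, i)" "s \<in> ks (u i)" by (cases z) (simp add: vkeys_iff)
    then have "u i \<noteq> 0" by auto
    then show "z \<in> (\<Union>i\<in>{i. u i \<noteq> 0}. (\<lambda>t. (t, i)) ` ks (u i))" using z by blast
  qed
  moreover have "finite (\<Union>i\<in>{i. u i \<noteq> 0}. (\<lambda>t. (t, i)) ` ks (u i))"
    using assms unfolding fsupp_def by (intro finite_UN_I) simp_all
  ultimately show ?thesis by (rule finite_subset)
qed

lemma fsupp_vsmul:
  fixes u :: "('x,'a::field) vec"
  shows "fsupp u \<Longrightarrow> fsupp (vsmul p u)"
  unfolding fsupp_def vsmul_def
  by (rule finite_subset[rotated]) auto

lemma fsupp_diff:
  fixes a b :: "('x,'a::field) vec"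
  assumes "fsupp a" "fsupp b" shows "fsupp (a - b)"
proof -
  have S: "{i. (a - b) i \<noteq> 0} \<subseteq> {i. a i \<noteq> 0} \<union> {i. b i \<noteq> 0}" by auto
  have "finite ({i. a i \<noteq> 0} \<union> {i. b i \<noteq> 0})" using assms unfolding fsupp_def by simp
  then show ?thesis unfolding fsupp_def by (rule finite_subset[OF S])
qed

lemma fsupp_unitv: "fsupp (unitv i :: ('x,'a::field) vec)"
proof -
  have "{j. (unitv i :: ('x,'a) vec) j \<noteq> 0} \<subseteq> {i}" by (auto simp: unitv_def)
  then show ?thesis unfolding fsupp_def by (rule finite_subset) simp
qed

lemma vkeys_vsmul_mono:
  fixes u :: "('x,'a::field) vec"
  shows "vkeys (vsmul (mono t) u) = (\<lambda>(s, i). (t + s, i)) ` vkeys u"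
proof -
  have "z \<in> vkeys (vsmul (mono t) u) \<longleftrightarrow> z \<in> (\<lambda>(s, i). (t + s, i)) ` vkeys u" for z
  proof (cases z)
    case (Pair s i)
    have "z \<in> vkeys (vsmul (mono t) u) \<longleftrightarrow> s \<in> (+) t ` ks (u i)"
      by (simp add: Pair vkeys_iff vsmul_def keys_mono_mult)
    also have "\<dots> \<longleftrightarrow> z \<in> (\<lambda>(s, i). (t + s, i)) ` vkeys u"
    proof
      assume "s \<in> (+) t ` ks (u i)"
      then obtain r where "r \<in> ks (u i)" "s = t + r" by blast
      then show "z \<in> (\<lambda>(s, i). (t + s, i)) ` vkeys u"
        using Pair by (intro image_eqI[of _ _ "(r, i)"]) (simp_all add: vkeys_iff)
    next
      assume "z \<in> (\<lambda>(s, i). (t + s, i)) ` vkeys u"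
      then obtain r j where "(r, j) \<in> vkeys u" "z = (t + r, j)" by auto
      then show "s \<in> (+) t ` ks (u i)" using Pair by (auto simp: vkeys_iff)
    qed
    finally show ?thesis .
  qed
  then show ?thesis by blast
qed

lemma mt_parts: assumes "mod_term_order ord"
  shows "strict_linear ord" "\<forall>s i t j r. ord (s, i) (t, j) \<longrightarrow> ord (s + r, i) (t + r, j)"
  using assms unfolding mod_term_order_def
  by (rule conjunct1, rule conjunct2[OF conjunct2[OF conjunct2]])

lemma lppM_vsmul_mono:
  fixes u :: "('x,'a::field) vec"
  assumes "mod_term_order ord" "fsupp u" "lppM ord u = Some (s, i)"
  shows "lppM ord (vsmul (mono t) u) = Some (t + s, i)"
proof -
  have sl: "strict_linear ord" by (rule mt_parts(1)[OF assms(1)])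
  have A: "(s, i) \<in> vkeys u \<and> (\<forall>y\<in>vkeys u. y \<noteq> (s, i) \<longrightarrow> ord y (s, i))"
    using lterm_SomeD[OF sl vkeys_finite[OF assms(2)]] assms(3) unfolding lppM_def by blast
  show ?thesis unfolding lppM_def vkeys_vsmul_mono
  proof (rule lterm_Some[OF sl])
    show "(t + s, i) \<in> (\<lambda>(s, i). (t + s, i)) ` vkeys u" using A by force
    show "\<forall>y\<in>(\<lambda>(s, i). (t + s, i)) ` vkeys u. y \<noteq> (t + s, i) \<longrightarrow> ord y (t + s, i)"
    proof (intro ballI impI)
      fix y assume "y \<in> (\<lambda>(s, i). (t + s, i)) ` vkeys u" "y \<noteq> (t + s, i)"
      then obtain r j where rj: "(r, j) \<in> vkeys u" "y = (t + r, j)" by auto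
      have "(r, j) \<noteq> (s, i)"
      proof
        assume "(r, j) = (s, i)" then show False using rj(2) \<open>y \<noteq> (t + s, i)\<close> by simp
      qed
      then have "ord (r, j) (s, i)" using A rj(1) by blast
      then have "ord (r + t, j) (s + t, i)" by (rule mt_parts(2)[OF assms(1), rule_format])
      then show "ord y (t + s, i)" using rj(2) by (simp add: add.commute)
    qed
  qed
qed

lemma lppM_None: "lppM ord u = None \<longleftrightarrow> vkeys u = {}"
  unfolding lppM_def lterm_None by simp

lemma vkeys_vsmul_single0:
  fixes u :: "('x,'a::field) vec"
  shows "vkeys (vsmul (Poly_Mapping.single 0 c) u) \<subseteq> vkeys u"
proof
  fix z assume z: "z \<in> vkeys (vsmul (Poly_Mapping.single 0 c) u)"
  obtain s i where si: "z = (s, i)" by (cases z)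
  have "s \<in> ks (Poly_Mapping.single 0 c * u i)" using z si by (simp add: vkeys_iff vsmul_def)
  then have "s \<in> (+) 0 ` ks (u i)" by (rule subsetD[OF keys_single_mult])
  then show "z \<in> vkeys u" using si by (simp add: vkeys_iff)
qed

lemma vkeys_diff:
  fixes a b :: "('x,'a::field) vec"
  shows "vkeys (a - b) \<subseteq> vkeys a \<union> vkeys b"
proof
  fix z assume z: "z \<in> vkeys (a - b)"
  obtain s i where si: "z = (s, i)" by (cases z)
  have "s \<in> ks (a i - b i)" using z si by (simp add: vkeys_iff)
  then have "s \<in> ks (a i) \<union> ks (b i)" by (rule subsetD[OF keys_diff])
  then show "z \<in> vkeys a \<union> vkeys b" using si by (simp add: vkeys_iff)
qed

lemma lppM_diff_lower:
  fixes a b :: "('x,'a::field) vec"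
  assumes "mod_term_order ord" "fsupp a" "fsupp b" "lppM ord a = Some x"
    "opt_less ord (lppM ord b) (Some x)"
  shows "lppM ord (a - vsmul (Poly_Mapping.single 0 c) b) = Some x"
proof -
  have sl: "strict_linear ord" by (rule mt_parts(1)[OF assms(1)])
  have A: "x \<in> vkeys a \<and> (\<forall>y\<in>vkeys a. y \<noteq> x \<longrightarrow> ord y x)"
    using lterm_SomeD[OF sl vkeys_finite[OF assms(2)]] assms(4) unfolding lppM_def by blast
  have B: "ord z x" if z: "z \<in> vkeys b" for z
  proof (cases "lppM ord b")
    case None then show ?thesis using z lppM_None by blast
  next
    case (Some y)
    then have "ord y x" using assms(5) by (simp add: opt_less_def)
    show ?thesis using Some unfolding lppM_def
      by (rule lterm_le_less[OF sl vkeys_finite[OF assms(3)] _ z \<open>ord y x\<close>])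
  qed
  obtain s i where si: "x = (s, i)" by (cases x)
  have xb: "x \<notin> vkeys b" using B sl_irrefl[OF sl] by blast
  have nb: "s \<notin> ks (Poly_Mapping.single 0 c * b i)"
  proof
    assume "s \<in> ks (Poly_Mapping.single 0 c * b i)"
    then have "s \<in> (+) 0 ` ks (b i)" by (rule subsetD[OF keys_single_mult])
    then show False using xb si by (simp add: vkeys_iff)
  qed
  have "s \<in> ks (a i)" using A si by (simp add: vkeys_iff)
  then have "x \<in> vkeys (a - vsmul (Poly_Mapping.single 0 c) b)"
    using nb si by (simp add: vkeys_iff vsmul_def in_keys_iff lookup_minus)
  moreover have "\<forall>y\<in>vkeys (a - vsmul (Poly_Mapping.single 0 c) b). y \<noteq> x \<longrightarrow> ord y x"
  proof (intro ballI impI)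
    fix y assume y: "y \<in> vkeys (a - vsmul (Poly_Mapping.single 0 c) b)" "y \<noteq> x"
    have "y \<in> vkeys a \<union> vkeys (vsmul (Poly_Mapping.single 0 c) b)"
      by (rule subsetD[OF vkeys_diff y(1)])
    then have "y \<in> vkeys a \<or> y \<in> vkeys b"
      using vkeys_vsmul_single0[of c b] by (simp only: Un_iff) blast
    then show "ord y x"
    proof
      assume "y \<in> vkeys a" then show ?thesis using A y(2) by blast
    next
      assume "y \<in> vkeys b" then show ?thesis by (rule B)
    qed
  qed
  ultimately show ?thesis unfolding lppM_def by (rule lterm_Some[OF sl])
qed


lemma pp_lcm_sym_eq:
  fixes a b :: "'x pp"
  shows "(pp_lcm a b - a) + a = (pp_lcm b a - b) + b"
  by (rule poly_mapping_eqI) (simp add: pp_lcm_def lookup_add lookup_minus)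

lemma pp_lcm_shift:
  fixes su tf :: "'x pp"
  shows "pp_lcm su (tf + su) - (tf + su) = 0" "pp_lcm su (tf + su) - su = tf"
  by (rule poly_mapping_eqI, simp add: pp_lcm_def lookup_add lookup_minus)+

lemma pp_decomp:
  fixes t su s1 s :: "'x pp"
  assumes "t + su = s1 + s"
  shows "s = (pp_lcm su s1 - s1) + (t + su - pp_lcm su s1)"
    "t = (pp_lcm su s1 - su) + (t + su - pp_lcm su s1)"
proof -
  have e: "lk t x + lk su x = lk s1 x + lk s x" for x
    using arg_cong[OF assms, of "\<lambda>p. lk p x"] by (simp add: lookup_add)
  show "s = (pp_lcm su s1 - s1) + (t + su - pp_lcm su s1)"
  proof (rule poly_mapping_eqI)
    fix x show "lk s x = lk ((pp_lcm su s1 - s1) + (t + su - pp_lcm su s1)) x"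
      using e[of x] by (simp add: pp_lcm_def lookup_add lookup_minus)
  qed
  show "t = (pp_lcm su s1 - su) + (t + su - pp_lcm su s1)"
  proof (rule poly_mapping_eqI)
    fix x show "lk t x = lk ((pp_lcm su s1 - su) + (t + su - pp_lcm su s1)) x"
      using e[of x] by (simp add: pp_lcm_def lookup_add lookup_minus)
  qed
qed

lemma lmul_fst: "fst (lmul t p) = vsmul (mono t) (fst p)"
  by (simp add: lmul_def)
lemma lmul_snd: "snd (lmul t p) = mono t * snd p"
  by (simp add: lmul_def)

lemma lppM_Some_ex:
  assumes "vkeys u \<noteq> {}" shows "\<exists>s i. lppM ord u = Some (s, i)"
  using assms unfolding lppM_def lterm_def by simp

lemma mono_lookup:
  fixes f :: "('x,'a::field) poly"
  shows "lk (mono t * f) (t + a) = lk f a"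
  unfolding mono_def using lookup_single_mult[of t 1 f a] by simp


lemma part1_core:
  fixes G :: "('x,'a::field) labpoly list"
  assumes R: "pp_term_order ordR" and M: "mod_term_order ordM"
    and fk: "fsupp (fst (G ! k))" and fl: "fsupp (fst (G ! l))"
    and reg: "regular_cp ordR ordM G k l"
    and red: "reduces ordR ordM G (spoly ordR G k l) wh"
  shows "\<exists>su i a. lppM ordM (fst (G ! k)) = Some (su, i) \<and>
           lppM ordM (fst wh) = Some (tmul ordR G k l + su, i) \<and>
           lppR ordR (snd (G ! k)) = Some a \<and>
           opt_less ordR (lppR ordR (snd wh)) (Some (tmul ordR G k l + a))"
proof -
  have slR: "strict_linear ordR" by (rule pp_parts(1)[OF R])
  define u where "u = fst (G ! k)"
  define f where "f = snd (G ! k)"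
  define v where "v = fst (G ! l)"
  define g where "g = snd (G ! l)"
  define tf where "tf = tmul ordR G k l"
  define tg where "tg = tmul ordR G l k"
  have f0: "f \<noteq> 0" and g0: "g \<noteq> 0"
    and regl: "opt_less ordM (lppM ordM (vsmul (mono tg) v)) (lppM ordM (vsmul (mono tf) u))"
    using reg unfolding regular_cp_def f_def g_def u_def v_def tf_def tg_def lmul_fst by auto
  obtain X where X: "lppM ordM (vsmul (mono tf) u) = Some X"
    using regl by (cases "lppM ordM (vsmul (mono tf) u)") (simp_all add: opt_less_def)
  have "vkeys u \<noteq> {}"
  proof
    assume "vkeys u = {}"
    then have "vkeys (vsmul (mono tf) u) = {}" by (simp add: vkeys_vsmul_mono)
    then show False using X lppM_None by (metis option.distinct(1))
  qed
  then obtain su i where su: "lppM ordM u = Some (su, i)" using lppM_Some_ex by blast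
  have fu: "fsupp u" using fk unfolding u_def .
  have fv: "fsupp v" using fl unfolding v_def .
  have Xe: "lppM ordM (vsmul (mono tf) u) = Some (tf + su, i)"
    by (rule lppM_vsmul_mono[OF M fu su])
  obtain a where a: "lppR ordR f = Some a" using f0 lppR_None by (cases "lppR ordR f") auto
  obtain b where b: "lppR ordR g = Some b" using g0 lppR_None by (cases "lppR ordR g") auto
  have tfe: "tf = pp_lcm a b - a" unfolding tf_def tmul_def Let_def
    using a b unfolding f_def g_def by simp
  have tge: "tg = pp_lcm b a - b" unfolding tg_def tmul_def Let_def
    using a b unfolding f_def g_def by simp
  define c where "c = lcR ordR f / lcR ordR g"
  have sp: "spoly ordR G k l = (vsmul (mono tf) u - vsmul (Poly_Mapping.single 0 c) (vsmul (mono tg) v),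
                                mono tf * f - Poly_Mapping.single 0 c * (mono tg * g))"
    unfolding spoly_def Let_def c_def f_def g_def u_def v_def tf_def tg_def lmul_def by simp
  have "lppM ordM (vsmul (mono tf) u - vsmul (Poly_Mapping.single 0 c) (vsmul (mono tg) v)) = Some (tf + su, i)"
    by (rule lppM_diff_lower[OF M fsupp_vsmul[OF fu] fsupp_vsmul[OF fv] Xe]) (use regl Xe in simp)
  then have V: "lppM ordM (fst (spoly ordR G k l)) = Some (tf + su, i)" by (simp add: sp)
  have sm: "Poly_Mapping.single 0 c * (mono tg * g) = Poly_Mapping.single tg c * g"
    unfolding mono_def by (simp add: mult.assoc[symmetric] mult_single)
  have xeq: "tf + a = tg + b" unfolding tfe tge by (rule pp_lcm_sym_eq)
  have bk: "b \<in> ks g" using lppR_SomeD[OF R b] by blast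
  then have gb: "lk g b \<noteq> 0" by (simp add: in_keys_iff)
  have lkx: "lk (mono tf * f) (tf + a) = c * lk g b"
    unfolding mono_lookup c_def lcR_eq[OF a] lcR_eq[OF b] using gb by simp
  have "opt_less ordR (lppR ordR (mono tf * f - Poly_Mapping.single tg c * g)) (Some (tf + a))"
    by (rule cancel_less[OF R lppR_mono_mult[OF R a] b xeq lkx])
  then have P: "opt_less ordR (lppR ordR (snd (spoly ordR G k l))) (Some (tf + a))"
    by (simp add: sp sm)
  have rr: "(red1 ordR ordM G)\<^sup>*\<^sup>* (spoly ordR G k l) wh" using red unfolding reduces_def by blast
  note W = red1_rtrancl[OF R rr]
  have "opt_less ordR (lppR ordR (snd wh)) (Some (tf + a))"
  proof (cases "lppR ordR (snd wh) = lppR ordR (snd (spoly ordR G k l))")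
    case True then show ?thesis using P by simp
  next
    case False then show ?thesis using W P opt_less_trans[OF slR] by blast
  qed
  moreover have "lppM ordM (fst wh) = Some (tf + su, i)" using W V by simp
  ultimately show ?thesis using su a unfolding u_def f_def tf_def by blast
qed


lemma G_after_last: "G_after F m G wh ! (length (G_after F m G wh) - 1) = wh"
proof -
  have "G_after F m G wh = (G @ (if snd wh \<noteq> 0 then new_syz F m wh else [])) @ [wh]"
    unfolding G_after_def by simp
  then show ?thesis by (metis diff_Suc_1 length_append_singleton nth_append_length)
qed

lemma G_after_nth: "k < length G \<Longrightarrow> G_after F m G wh ! k = G ! k"
  unfolding G_after_def by (simp add: nth_append)

lemma mono_zero: "(mono 0 :: ('x,'a::field) poly) = 1"
  unfolding mono_def by simp

lemma part1:
  fixes G :: "('x,'a::field) labpoly list"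
  assumes R: "pp_term_order ordR" and M: "mod_term_order ordM" and kG: "k < length G"
    and fk: "fsupp (fst (G ! k))" and fl: "fsupp (fst (G ! l))"
    and reg: "regular_cp ordR ordM G k l"
    and red: "reduces ordR ordM G (spoly ordR G k l) wh"
  shows "gless ordR ordM (G_after F m G wh) (length (G_after F m G wh) - 1) k"
proof -
  obtain su i a where C: "lppM ordM (fst (G ! k)) = Some (su, i)"
    "lppM ordM (fst wh) = Some (tmul ordR G k l + su, i)"
    "lppR ordR (snd (G ! k)) = Some a"
    "opt_less ordR (lppR ordR (snd wh)) (Some (tmul ordR G k l + a))"
    using part1_core[OF R M fk fl reg red] by blast
  define tf where "tf = tmul ordR G k l"
  have B: "lppR ordR (mono tf * snd (G ! k)) = Some (tf + a)" by (rule lppR_mono_mult[OF R C(3)])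
  show ?thesis
    unfolding gless_def G_after_last G_after_nth[OF kG]
    using C B pp_lcm_shift[of su tf] unfolding tf_def[symmetric]
    by (simp add: Let_def mono_zero)
qed


lemma part2:
  fixes G :: "('x,'a::field) labpoly list"
  assumes R: "pp_term_order ordR" and M: "mod_term_order ordM"
    and fk: "fsupp (fst (G ! k))" and f0: "snd (G ! k) \<noteq> 0"
    and rd: "reducible ordR ordM G (lmul t (G ! k))"
    and red: "reduces ordR ordM G (lmul t (G ! k)) wh"
    and k': "k' < length G"
    and n1: "lppM ordM (fst (G ! k')) \<noteq> None" and n2: "lppR ordR (snd (G ! k')) \<noteq> None"
    and e1: "lppM ordM (fst wh) = Some (fst (the (lppM ordM (fst (G ! k')))) + s,
                                      snd (the (lppM ordM (fst (G ! k')))))"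
    and e2: "lppR ordR (snd wh) = Some (the (lppR ordR (snd (G ! k'))) + s)"
  shows "genrew ordR ordM G t k"
proof -
  obtain s1 i1 where u': "lppM ordM (fst (G ! k')) = Some (s1, i1)"
    using n1 by (cases "lppM ordM (fst (G ! k'))") auto
  obtain b1 where f': "lppR ordR (snd (G ! k')) = Some b1"
    using n2 by (cases "lppR ordR (snd (G ! k'))") auto
  have w: "lppM ordM (fst wh) = Some (s1 + s, i1)" using e1 u' by simp
  have h: "lppR ordR (snd wh) = Some (b1 + s)" using e2 f' by simp
  have rr: "(red1 ordR ordM G)\<^sup>*\<^sup>* (lmul t (G ! k)) wh" using red unfolding reduces_def by blast
  have wt: "lppM ordM (vsmul (mono t) (fst (G ! k))) = Some (s1 + s, i1)"
    using red1_rtrancl[OF R rr] w by (simp add: lmul_fst)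
  have "vkeys (fst (G ! k)) \<noteq> {}"
  proof
    assume "vkeys (fst (G ! k)) = {}"
    then have "vkeys (vsmul (mono t) (fst (G ! k))) = {}" by (simp add: vkeys_vsmul_mono)
    then show False using wt lppM_None by (metis option.distinct(1))
  qed
  then obtain su iu where u: "lppM ordM (fst (G ! k)) = Some (su, iu)" using lppM_Some_ex by blast
  have "lppM ordM (vsmul (mono t) (fst (G ! k))) = Some (t + su, iu)"
    by (rule lppM_vsmul_mono[OF M fk u])
  then have tsu: "t + su = s1 + s" and iu: "iu = i1" using wt by simp_all
  obtain lf where lf: "lppR ordR (snd (G ! k)) = Some lf"
    using f0 lppR_None by (cases "lppR ordR (snd (G ! k))") auto
  have "opt_less ordR (lppR ordR (snd wh)) (lppR ordR (snd (lmul t (G ! k))))"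
    by (rule reduces_strict[OF R rd red])
  then have o1: "ordR (b1 + s) (t + lf)"
    using h lppR_mono_mult[OF R lf, of t] by (simp add: lmul_snd opt_less_def)
  define L where "L = pp_lcm su s1"
  define r where "r = t + su - L"
  have sd: "s = (L - s1) + r" and td: "t = (L - su) + r"
    using pp_decomp[OF tsu] unfolding L_def r_def by simp_all
  have "ordR ((L - s1 + b1) + r) ((L - su + lf) + r)"
    using o1 unfolding sd td by (simp add: ac_simps)
  then have o2: "ordR (L - s1 + b1) (L - su + lf)" by (rule pp_cancel[OF R])
  have gl: "gless ordR ordM G k' k"
    unfolding gless_def using u' u o2 lppR_mono_mult[OF R f', of "L - s1"] lppR_mono_mult[OF R lf, of "L - su"]
    unfolding L_def by (simp add: Let_def opt_less_def)
  have md: "mdvd (lppM ordM (fst (G ! k'))) (lppM ordM (fst (lmul t (G ! k))))"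
    using u' wt by (simp add: lmul_fst mdvd_def pp_dvd_def)
  show ?thesis unfolding genrew_def using k' gl md by blast
qed


definition ginv :: "('x,'a::field) labpoly list \<Rightarrow> (nat \<times> nat) set \<Rightarrow> bool" where
  "ginv G CP \<longleftrightarrow> (\<forall>g\<in>set G. fsupp (fst g)) \<and> (\<forall>p\<in>CP. fst p < length G \<and> snd p < length G)"

lemma red1_fsupp:
  fixes G :: "('x,'a::field) labpoly list"
  assumes "\<forall>g\<in>set G. fsupp (fst g)" "red1 ordR ordM G p q" "fsupp (fst p)"
  shows "fsupp (fst q)"
proof -
  obtain v g t c where vg: "(v, g) \<in> set G" and q: "fst q = fst p - vsmul (Poly_Mapping.single t c) v"
    using assms(2) unfolding red1_def Let_def by auto
  have "fsupp v" using assms(1) vg by fastforce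
  then show ?thesis unfolding q by (intro fsupp_diff assms(3) fsupp_vsmul)
qed

lemma rtrancl_fsupp:
  fixes G :: "('x,'a::field) labpoly list"
  assumes "\<forall>g\<in>set G. fsupp (fst g)" "(red1 ordR ordM G)\<^sup>*\<^sup>* p q" "fsupp (fst p)"
  shows "fsupp (fst q)"
  using assms(2,3) by (induction rule: rtranclp_induct) (auto intro: red1_fsupp[OF assms(1)])

lemma ginv_init:
  fixes F :: "nat \<Rightarrow> ('x,'a::field) poly"
  shows "ginv (fst (gbgc_init F m ps)) (snd (gbgc_init F m ps))"
  unfolding ginv_def gbgc_init_def
  by (auto intro!: fsupp_diff fsupp_vsmul fsupp_unitv)

lemma ginv_step:
  fixes F :: "nat \<Rightarrow> ('x,'a::field) poly"
  assumes "gbgc_step ordR ordM F m st st'" "ginv (fst st) (snd st)"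
  shows "ginv (fst st') (snd st')"
proof -
  obtain G CP where st: "st = (G, CP)" by (cases st)
  have I: "\<forall>g\<in>set G. fsupp (fst g)" "\<forall>p\<in>CP. fst p < length G \<and> snd p < length G"
    using assms(2) unfolding st ginv_def by simp_all
  from assms(1) obtain p where pCP: "p \<in> CP" and
    S: "(if \<exists>(k, l)\<in>{p, prod.swap p}. regular_cp ordR ordM G k l \<and> \<not> cp_genrew ordR ordM G k l
      then (\<exists>k l wh. (k, l) \<in> {p, prod.swap p} \<and> regular_cp ordR ordM G k l \<and> \<not> cp_genrew ordR ordM G k l \<and>
              reduces ordR ordM G (spoly ordR G k l) wh \<and>
              st' = (G_after F m G wh,
                     if snd wh \<noteq> 0
                     then (CP - {p}) \<union> {(length G + m, j) | j. j < length G \<and> snd (G ! j) \<noteq> 0}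
                     else CP - {p}))
      else st' = (G, CP - {p}))"
    unfolding gbgc_step_def st by auto
  show ?thesis
  proof (cases "\<exists>(k, l)\<in>{p, prod.swap p}. regular_cp ordR ordM G k l \<and> \<not> cp_genrew ordR ordM G k l")
    case False
    then have "st' = (G, CP - {p})" using S by simp
    then show ?thesis using I unfolding ginv_def by auto
  next
    case True
    then obtain k l wh where kl: "(k, l) \<in> {p, prod.swap p}"
      and red: "reduces ordR ordM G (spoly ordR G k l) wh"
      and st': "st' = (G_after F m G wh,
                     if snd wh \<noteq> 0
                     then (CP - {p}) \<union> {(length G + m, j) | j. j < length G \<and> snd (G ! j) \<noteq> 0}
                     else CP - {p})"
      using S[unfolded if_P[OF True]] by blast
    have kG: "k < length G" and lG: "l < length G" using kl I(2) pCP by (cases p; auto)+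
    have fk: "fsupp (fst (G ! k))" using I(1) kG by simp
    have fl: "fsupp (fst (G ! l))" using I(1) lG by simp
    have fsp: "fsupp (fst (spoly ordR G k l))"
      unfolding spoly_def Let_def lmul_def
      by (simp add: fsupp_diff fsupp_vsmul fk fl)
    have rr: "(red1 ordR ordM G)\<^sup>*\<^sup>* (spoly ordR G k l) wh" using red unfolding reduces_def by blast
    have fw: "fsupp (fst wh)" by (rule rtrancl_fsupp[OF I(1) rr fsp])
    have ns: "\<forall>g\<in>set (new_syz F m wh). fsupp (fst g)"
      unfolding new_syz_def by (auto intro!: fsupp_diff fsupp_vsmul fsupp_unitv fw)
    have setG: "\<forall>g\<in>set (G_after F m G wh). fsupp (fst g)"
      using I(1) ns fw unfolding G_after_def by auto
    have lenG: "length (G_after F m G wh) = length G + (if snd wh \<noteq> 0 then m else 0) + 1"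
      unfolding G_after_def new_syz_def by simp
    have "\<forall>q\<in>snd st'. fst q < length (fst st') \<and> snd q < length (fst st')"
      using I(2) unfolding st' by (auto simp: lenG)
    then show ?thesis using setG st' unfolding ginv_def by simp
  qed
qed

lemma ginv_reach:
  fixes F :: "nat \<Rightarrow> ('x,'a::field) poly"
  assumes "(gbgc_step ordR ordM F m)\<^sup>*\<^sup>* (gbgc_init F m ps) st"
  shows "ginv (fst st) (snd st)"
  using assms by (induction rule: rtranclp_induct) (auto intro: ginv_init ginv_step)

theorem mainTheorem5:
  fixes ordR :: "('x::finite) pp \<Rightarrow> 'x pp \<Rightarrow> bool"
    and ordM :: "'x mterm \<Rightarrow> 'x mterm \<Rightarrow> bool"
    and F :: "nat \<Rightarrow> ('x, 'a::field) poly"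
    and m :: nat
    and ps :: "(nat \<times> nat) list"
  assumes "pp_term_order ordR"
    and "mod_term_order ordM"
    and "distinct ps" and "set ps = {(i, j). i < j \<and> j < m}"
    and "(gbgc_step ordR ordM F m)\<^sup>*\<^sup>* (gbgc_init F m ps) (G, CP)"
  shows
    "(\<forall>p\<in>CP. \<forall>k l wh. (k, l) \<in> {p, prod.swap p} \<and> regular_cp ordR ordM G k l \<and>
        \<not> cp_genrew ordR ordM G k l \<and> reduces ordR ordM G (spoly ordR G k l) wh \<longrightarrow>
        gless ordR ordM (G_after F m G wh) (length (G_after F m G wh) - 1) k)
     \<and>
     (\<forall>k t wh. k < length G \<and> snd (G ! k) \<noteq> 0 \<and>
        reducible ordR ordM G (lmul t (G ! k)) \<and> reduces ordR ordM G (lmul t (G ! k)) wh \<and>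
        (\<exists>k' < length G. \<exists>s.
           lppM ordM (fst (G ! k')) \<noteq> None \<and> lppR ordR (snd (G ! k')) \<noteq> None \<and>
           lppM ordM (fst wh) = Some (fst (the (lppM ordM (fst (G ! k')))) + s,
                                      snd (the (lppM ordM (fst (G ! k'))))) \<and>
           lppR ordR (snd wh) = Some (the (lppR ordR (snd (G ! k'))) + s) \<and>
           lcM ordM (fst wh) / lcM ordM (fst (G ! k')) = lcR ordR (snd wh) / lcR ordR (snd (G ! k'))) \<longrightarrow>
        genrew ordR ordM G t k)"
  proof -
  have I: "ginv G CP" using ginv_reach[OF assms(5)] by simp
  have I1: "\<forall>g\<in>set G. fsupp (fst g)" and I2: "\<forall>p\<in>CP. fst p < length G \<and> snd p < length G"
    using I unfolding ginv_def by simp_all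
  have P1: "gless ordR ordM (G_after F m G wh) (length (G_after F m G wh) - 1) k"
    if "p \<in> CP" "(k, l) \<in> {p, prod.swap p}" "regular_cp ordR ordM G k l"
       "reduces ordR ordM G (spoly ordR G k l) wh" for p k l wh
  proof -
    have kG: "k < length G" and lG: "l < length G" using that(1,2) I2 by (cases p; auto)+
    show ?thesis
      by (rule part1[OF assms(1,2) kG _ _ that(3,4)]) (simp_all add: I1 kG lG)
  qed
  have P2: "genrew ordR ordM G t k"
    if A: "k < length G" "snd (G ! k) \<noteq> 0" "reducible ordR ordM G (lmul t (G ! k))"
      "reduces ordR ordM G (lmul t (G ! k)) wh"
      "\<exists>k' < length G. \<exists>s.
           lppM ordM (fst (G ! k')) \<noteq> None \<and> lppR ordR (snd (G ! k')) \<noteq> None \<and>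
           lppM ordM (fst wh) = Some (fst (the (lppM ordM (fst (G ! k')))) + s,
                                      snd (the (lppM ordM (fst (G ! k'))))) \<and>
           lppR ordR (snd wh) = Some (the (lppR ordR (snd (G ! k'))) + s) \<and>
           lcM ordM (fst wh) / lcM ordM (fst (G ! k')) = lcR ordR (snd wh) / lcR ordR (snd (G ! k'))"
    for k t wh
  proof -
    obtain k' s where k': "k' < length G" "lppM ordM (fst (G ! k')) \<noteq> None" "lppR ordR (snd (G ! k')) \<noteq> None"
      "lppM ordM (fst wh) = Some (fst (the (lppM ordM (fst (G ! k')))) + s,
                                      snd (the (lppM ordM (fst (G ! k')))))"
      "lppR ordR (snd wh) = Some (the (lppR ordR (snd (G ! k'))) + s)"
      using A(5) by blast
    have fk: "fsupp (fst (G ! k))" using I1 A(1) by simp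
    show ?thesis by (rule part2[OF assms(1,2) fk A(2,3,4) k'])
  qed
  show ?thesis using P1 P2 by blast
qed

end
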